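(* Let $\mathbf a\in\mathbb{R}^{\mathbb{N}}$. If the linear centrality $f^{\mathbf a}$ is rank monotone, then it is score monotone.
   Context: Graphs are finite directed graphs; $d_G(x,y)$ is the shortest directed path length from $x$ to $y$ ($\infty$ if none). The linear centrality is $f^{\mathbf a}_G(i)=\sum_{z\in V_G,\ d_G(z,i)<\infty}a_{d_G(z,i)}$. For a graph $G$ and distinct nodes $x,y$ with $(x,y)\notin E_G$, let $G'$ be $G$ with the arc $x\to y$ added. A centrality $f$ is score monotone if for all such $G,x,y$, $f_{G'}(y)>f_G(y)$. It is rank monotone if for all such $G,x,y$ and every node $w\ne y$: if $f_G(w)\le f_G(y)$ then $f_{G'}(w)<f_{G'}(y)$. *)

theory Defs
  imports Main "HOL-Library.Extended_Nat"
begin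

type_synonym graph = "nat set \<times> (nat \<times> nat) set"

definition nodes :: "graph \<Rightarrow> nat set" where "nodes G = fst G"
definition arcs :: "graph \<Rightarrow> (nat \<times> nat) set" where "arcs G = snd G"

definition wf_graph :: "graph \<Rightarrow> bool" where
  "wf_graph G \<longleftrightarrow> finite (nodes G) \<and> arcs G \<subseteq> nodes G \<times> nodes G"

definition reaches :: "graph \<Rightarrow> nat \<Rightarrow> nat \<Rightarrow> bool" where
  "reaches G x y \<longleftrightarrow> x \<in> nodes G \<and> (\<exists>n. (x, y) \<in> arcs G ^^ n)"

definition dist :: "graph \<Rightarrow> nat \<Rightarrow> nat \<Rightarrow> enat" where
  "dist G x y = (if reaches G x y then enat (LEAST n. (x, y) \<in> arcs G ^^ n) else \<infinity>)"

definition lin_cent :: "(nat \<Rightarrow> real) \<Rightarrow> graph \<Rightarrow> nat \<Rightarrow> real" where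
  "lin_cent a G i = (\<Sum>z\<in>{z \<in> nodes G. dist G z i < \<infinity>}. a (the_enat (dist G z i)))"

definition add_arc :: "graph \<Rightarrow> nat \<Rightarrow> nat \<Rightarrow> graph" where
  "add_arc G x y = (nodes G, insert (x, y) (arcs G))"

definition score_monotone :: "(graph \<Rightarrow> nat \<Rightarrow> real) \<Rightarrow> bool" where
  "score_monotone f \<longleftrightarrow>
     (\<forall>G x y. wf_graph G \<and> x \<in> nodes G \<and> y \<in> nodes G \<and> x \<noteq> y \<and> (x, y) \<notin> arcs G
        \<longrightarrow> f (add_arc G x y) y > f G y)"

definition rank_monotone :: "(graph \<Rightarrow> nat \<Rightarrow> real) \<Rightarrow> bool" where
  "rank_monotone f \<longleftrightarrow>
     (\<forall>G x y. wf_graph G \<and> x \<in> nodes G \<and> y \<in> nodes G \<and> x \<noteq> y \<and> (x, y) \<notin> arcs G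
        \<longrightarrow> (\<forall>w \<in> nodes G. w \<noteq> y \<longrightarrow> f G w \<le> f G y
              \<longrightarrow> f (add_arc G x y) w < f (add_arc G x y) y))"

end

theory Submission
  imports Defs
begin

lemma relpow_restrict:
  assumes "\<And>m w. (m,w) \<in> E \<Longrightarrow> w \<in> A \<Longrightarrow> m \<in> A" "v \<in> A"
  shows "(u,v) \<in> E^^n \<longleftrightarrow> (u,v) \<in> (E \<inter> A \<times> A)^^n"
  using assms(2)
proof (induction n arbitrary: v)
  case 0
  then show ?case by simp
next
  case (Suc n)
  show ?case
  proof
    assume "(u,v) \<in> E^^Suc n"
    then obtain m where m: "(u,m) \<in> E^^n" "(m,v) \<in> E" by auto
    have "m \<in> A" using assms(1) m(2) Suc.prems by blast
    then show "(u,v) \<in> (E \<inter> A \<times> A)^^Suc n" using Suc.IH m Suc.prems by auto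
  next
    assume "(u,v) \<in> (E \<inter> A \<times> A)^^Suc n"
    then obtain m where m: "(u,m) \<in> (E \<inter> A \<times> A)^^n" "(m,v) \<in> E" "m \<in> A" by auto
    then show "(u,v) \<in> E^^Suc n" using Suc.IH by auto
  qed
qed

lemma relpow_restrict_src:
  "(u,v) \<in> (E \<inter> A \<times> A)^^n \<Longrightarrow> v \<in> A \<Longrightarrow> u \<in> A"
  by (induction n arbitrary: v) auto

lemma dist_fin: "dist G z v < \<infinity> \<longleftrightarrow> reaches G z v"
  by (simp add: dist_def)

lemma reaches_nodes: "reaches G z v \<Longrightarrow> z \<in> nodes G"
  by (simp add: reaches_def)

lemma lin_cent_alt: "lin_cent a G v = (\<Sum>z\<in>{z. reaches G z v}. a (the_enat (dist G z v)))"
proof -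
  have "{z \<in> nodes G. dist G z v < \<infinity>} = {z. reaches G z v}"
    using dist_fin reaches_nodes by blast
  then show ?thesis unfolding lin_cent_def by simp
qed

lemma lin_cent_restrict:
  assumes "A \<subseteq> nodes G" "v \<in> A" "\<And>m w. (m,w) \<in> arcs G \<Longrightarrow> w \<in> A \<Longrightarrow> m \<in> A"
  shows "lin_cent a G v = lin_cent a (A, arcs G \<inter> A \<times> A) v"
proof -
  let ?G = "(A, arcs G \<inter> A \<times> A)"
  have aG: "arcs ?G = arcs G \<inter> A \<times> A" by (simp add: arcs_def)
  have nG: "nodes ?G = A" by (simp add: nodes_def)
  have eq: "\<And>z n. (z,v) \<in> arcs G ^^ n \<longleftrightarrow> (z,v) \<in> arcs ?G ^^ n"
    unfolding aG by (rule relpow_restrict[OF assms(3) assms(2)])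
  have r: "reaches G z v \<longleftrightarrow> reaches ?G z v" for z
  proof
    assume "reaches G z v"
    then obtain n where n: "(z,v) \<in> arcs G ^^ n" unfolding reaches_def by blast
    then have n': "(z,v) \<in> arcs ?G ^^ n" using eq by simp
    then have "(z,v) \<in> (arcs G \<inter> A \<times> A) ^^ n" unfolding aG .
    then have "z \<in> A" using assms(2) by (rule relpow_restrict_src)
    then show "reaches ?G z v" using n' unfolding reaches_def nG by blast
  next
    assume "reaches ?G z v"
    then obtain n where n: "(z,v) \<in> arcs ?G ^^ n" and zA: "z \<in> A" unfolding reaches_def nG by blast
    then have "(z,v) \<in> arcs G ^^ n" using eq by simp
    then show "reaches G z v" using zA assms(1) unfolding reaches_def by blast
  qed
  have d: "dist G z v = dist ?G z v" for z
    unfolding dist_def by (simp only: r eq)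
  have s: "{z. reaches G z v} = {z. reaches ?G z v}" using r by blast
  show ?thesis unfolding lin_cent_alt s d ..
qed

lemma relpow_map:
  assumes "inj h"
  shows "(h u, h v) \<in> (map_prod h h ` E)^^n \<longleftrightarrow> (u,v) \<in> E^^n"
proof (induction n arbitrary: v)
  case 0
  then show ?case using assms by (simp add: inj_eq)
next
  case (Suc n)
  show ?case
  proof
    assume "(h u, h v) \<in> (map_prod h h ` E)^^Suc n"
    then obtain m where m: "(h u, m) \<in> (map_prod h h ` E)^^n" "(m, h v) \<in> map_prod h h ` E"
      by (rule relpow_Suc_E)
    then obtain m' v' where "(m', v') \<in> E" "m = h m'" "h v = h v'" by blast
    then show "(u,v) \<in> E^^Suc n" using Suc.IH m assms by (auto simp: inj_eq)
  next
    assume "(u,v) \<in> E^^Suc n"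
    then obtain m where m: "(u,m) \<in> E^^n" "(m,v) \<in> E" by auto
    then show "(h u, h v) \<in> (map_prod h h ` E)^^Suc n" using Suc.IH by force
  qed
qed

lemma lin_cent_map:
  assumes "inj h" "arcs G \<subseteq> nodes G \<times> nodes G"
  shows "lin_cent a (h ` nodes G, map_prod h h ` arcs G) (h v) = lin_cent a G v"
proof -
  let ?H = "(h ` nodes G, map_prod h h ` arcs G)"
  have r: "\<And>z. reaches ?H (h z) (h v) \<longleftrightarrow> reaches G z v"
    unfolding reaches_def using relpow_map[OF assms(1)] assms(1)
    by (auto simp: nodes_def arcs_def inj_image_mem_iff)
  have d: "\<And>z. dist ?H (h z) (h v) = dist G z v"
    unfolding dist_def using r relpow_map[OF assms(1)] by (simp add: arcs_def)
  have s: "{z \<in> nodes ?H. dist ?H z (h v) < \<infinity>} = h ` {z \<in> nodes G. dist G z v < \<infinity>}"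
  proof
    show "{z \<in> nodes ?H. dist ?H z (h v) < \<infinity>} \<subseteq> h ` {z \<in> nodes G. dist G z v < \<infinity>}"
    proof
      fix z assume "z \<in> {z \<in> nodes ?H. dist ?H z (h v) < \<infinity>}"
      then obtain z' where "z = h z'" "z' \<in> nodes G" "dist ?H (h z') (h v) < \<infinity>"
        by (auto simp: nodes_def)
      then show "z \<in> h ` {z \<in> nodes G. dist G z v < \<infinity>}" using d[of z'] by auto
    qed
  next
    show "h ` {z \<in> nodes G. dist G z v < \<infinity>} \<subseteq> {z \<in> nodes ?H. dist ?H z (h v) < \<infinity>}"
    proof
      fix z assume "z \<in> h ` {z \<in> nodes G. dist G z v < \<infinity>}"
      then obtain z' where "z = h z'" "z' \<in> nodes G" "dist G z' v < \<infinity>" by blast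
      then show "z \<in> {z \<in> nodes ?H. dist ?H z (h v) < \<infinity>}" using d[of z'] by (simp add: nodes_def)
    qed
  qed
  have ij: "inj_on h {z \<in> nodes G. dist G z v < \<infinity>}" by (rule inj_on_subset[OF assms(1)]) simp
  have "lin_cent a ?H (h v) = (\<Sum>z\<in>h ` {z \<in> nodes G. dist G z v < \<infinity>}. a (the_enat (dist ?H z (h v))))"
    unfolding lin_cent_def s ..
  also have "\<dots> = (\<Sum>z\<in>{z \<in> nodes G. dist G z v < \<infinity>}. a (the_enat (dist ?H (h z) (h v))))"
    by (rule sum.reindex_cong[OF ij refl]) simp
  also have "\<dots> = lin_cent a G v" unfolding lin_cent_def d ..
  finally show ?thesis .
qed

lemma setc: "E \<subseteq> V \<times> V \<Longrightarrow> F \<subseteq> W \<times> W \<Longrightarrow> V \<inter> W = {} \<Longrightarrow> (E \<union> F) \<inter> W \<times> W = F"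
  by blast
lemma setc2: "E \<subseteq> V \<times> V \<Longrightarrow> F \<subseteq> W \<times> W \<Longrightarrow> V \<inter> W = {} \<Longrightarrow> (E \<union> F) \<inter> V \<times> V = E"
  by blast
lemma setb: "E \<subseteq> V \<times> V \<Longrightarrow> F \<subseteq> W \<times> W \<Longrightarrow> V \<inter> W = {} \<Longrightarrow> (m,w) \<in> E \<union> F \<Longrightarrow> w \<in> W \<Longrightarrow> m \<in> W"
  by blast
lemma setb2: "E \<subseteq> V \<times> V \<Longrightarrow> F \<subseteq> W \<times> W \<Longrightarrow> V \<inter> W = {} \<Longrightarrow> (m,w) \<in> E \<union> F \<Longrightarrow> w \<in> V \<Longrightarrow> m \<in> V"
  by blast

theorem lemma1:
  fixes a :: "nat \<Rightarrow> real"
  assumes "rank_monotone (lin_cent a)"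
  shows "score_monotone (lin_cent a)"
  unfolding score_monotone_def
proof (intro allI impI, elim conjE)
  fix G x y
  assume wf: "wf_graph G" and x: "x \<in> nodes G" and y: "y \<in> nodes G" and xy: "x \<noteq> y"
    and nxy: "(x, y) \<notin> arcs G"
  define V where "V = nodes G"
  define E where "E = arcs G"
  have fin: "finite V" and EV: "E \<subseteq> V \<times> V" using wf by (auto simp: wf_graph_def V_def E_def)
  define N where "N = Suc (Max V)"
  define h where "h = (\<lambda>v::nat. v + N)"
  have inj: "inj h" by (simp add: h_def inj_on_def)
  have ltN: "\<And>v. v \<in> V \<Longrightarrow> v < N" using fin by (simp add: N_def le_imp_less_Suc)
  have VhV: "V \<inter> h ` V = {}" using ltN by (fastforce simp: h_def)
  have hE: "map_prod h h ` E \<subseteq> h ` V \<times> h ` V" using EV by auto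
  define H where "H = (V \<union> h ` V, E \<union> map_prod h h ` E)"
  have G: "G = (V, E)" by (simp add: V_def E_def nodes_def arcs_def)
  have wfH: "wf_graph H" using fin EV hE by (auto simp: wf_graph_def H_def nodes_def arcs_def)
  have xV: "x \<in> V" and yV: "y \<in> V" using x y by (auto simp: V_def)
  have hyV: "h y \<in> h ` V" using yV by auto
  have wy: "h y \<noteq> y" by (simp add: h_def N_def)
  have aH: "arcs H = E \<union> map_prod h h ` E" by (simp add: H_def arcs_def)
  have xnh: "x \<notin> h ` V" using VhV xV by (simp add: disjoint_iff)
  have "(x,y) \<notin> map_prod h h ` E" using hE xnh by (meson mem_Sigma_iff subsetD)
  then have nxyH: "(x, y) \<notin> arcs H" using nxy unfolding aH E_def by simp
  have c1: "arcs H \<inter> h ` V \<times> h ` V = map_prod h h ` E"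
    unfolding aH by (rule setc[OF EV hE VhV])
  have c2: "arcs H \<inter> V \<times> V = E"
    unfolding aH by (rule setc2[OF EV hE VhV])
  have b1: "\<And>m w. (m,w) \<in> arcs H \<Longrightarrow> w \<in> h ` V \<Longrightarrow> m \<in> h ` V"
    unfolding aH by (rule setb[OF EV hE VhV])
  have b2: "\<And>m w. (m,w) \<in> arcs H \<Longrightarrow> w \<in> V \<Longrightarrow> m \<in> V"
    unfolding aH by (rule setb2[OF EV hE VhV])
  have nH: "nodes H = V \<union> h ` V" by (simp add: H_def nodes_def)
  have "lin_cent a H (h y) = lin_cent a (h ` V, map_prod h h ` E) (h y)"
    using lin_cent_restrict[of "h ` V" H "h y" a, OF _ hyV b1] c1 nH by simp
  also have "\<dots> = lin_cent a G y"
    using lin_cent_map[OF inj, of G a y] EV by (simp add: V_def E_def)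
  finally have f1: "lin_cent a H (h y) = lin_cent a G y" .
  have "lin_cent a H y = lin_cent a (V, E) y"
    using lin_cent_restrict[of V H y a, OF _ yV b2] c2 nH by simp
  then have f2: "lin_cent a H y = lin_cent a G y" using G by simp
  define H' where "H' = add_arc H x y"
  have aH': "arcs H' = insert (x,y) E \<union> map_prod h h ` E" by (simp add: H'_def add_arc_def H_def arcs_def)
  have EV': "insert (x,y) E \<subseteq> V \<times> V" using EV xV yV by blast
  have c3: "arcs H' \<inter> h ` V \<times> h ` V = map_prod h h ` E"
    unfolding aH' by (rule setc[OF EV' hE VhV])
  have c4: "arcs H' \<inter> V \<times> V = insert (x,y) E"
    unfolding aH' by (rule setc2[OF EV' hE VhV])
  have b3: "\<And>m w. (m,w) \<in> arcs H' \<Longrightarrow> w \<in> h ` V \<Longrightarrow> m \<in> h ` V"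
    unfolding aH' by (rule setb[OF EV' hE VhV])
  have b4: "\<And>m w. (m,w) \<in> arcs H' \<Longrightarrow> w \<in> V \<Longrightarrow> m \<in> V"
    unfolding aH' by (rule setb2[OF EV' hE VhV])
  have nH': "nodes H' = V \<union> h ` V" using nH by (simp add: H'_def add_arc_def nodes_def)
  have "lin_cent a H' (h y) = lin_cent a (h ` V, map_prod h h ` E) (h y)"
    using lin_cent_restrict[of "h ` V" H' "h y" a, OF _ hyV b3] c3 nH' by simp
  also have "\<dots> = lin_cent a G y"
    using lin_cent_map[OF inj, of G a y] EV by (simp add: V_def E_def)
  finally have f3: "lin_cent a H' (h y) = lin_cent a G y" .
  have "lin_cent a H' y = lin_cent a (V, insert (x,y) E) y"
    using lin_cent_restrict[of V H' y a, OF _ yV b4] c4 nH' by simp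
  then have f4: "lin_cent a H' y = lin_cent a (add_arc G x y) y"
    by (simp add: add_arc_def V_def E_def)
  have hyH: "h y \<in> nodes H" using nH hyV by simp
  have xH: "x \<in> nodes H" "y \<in> nodes H" using nH xV yV by auto
  have "lin_cent a H' (h y) < lin_cent a H' y"
  proof -
    have "\<forall>w \<in> nodes H. w \<noteq> y \<longrightarrow> lin_cent a H w \<le> lin_cent a H y
              \<longrightarrow> lin_cent a (add_arc H x y) w < lin_cent a (add_arc H x y) y"
    proof -
      have pre: "wf_graph H \<and> x \<in> nodes H \<and> y \<in> nodes H \<and> x \<noteq> y \<and> (x, y) \<notin> arcs H"
        using wfH xH xy nxyH by simp
      have R: "\<forall>G x y. wf_graph G \<and> x \<in> nodes G \<and> y \<in> nodes G \<and> x \<noteq> y \<and> (x, y) \<notin> arcs G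
        \<longrightarrow> (\<forall>w \<in> nodes G. w \<noteq> y \<longrightarrow> lin_cent a G w \<le> lin_cent a G y
              \<longrightarrow> lin_cent a (add_arc G x y) w < lin_cent a (add_arc G x y) y)"
        using assms unfolding rank_monotone_def .
      show ?thesis by (rule mp[OF spec[OF spec[OF spec[OF R, of H], of x], of y] pre])
    qed
    then show ?thesis using hyH wy f1 f2 unfolding H'_def by simp
  qed
  then show "lin_cent a G y < lin_cent a (add_arc G x y) y" using f3 f4 by simp
qed

end
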